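(* Let $n\ge1$ and let $\lambda=(\lambda_1\ge\cdots\ge\lambda_n\ge0)$ be a partition (padded with zeros to length $n$). Then $$|\mathrm{SVT}(\lambda,n)|=\sum_{k_1=0}^{0}\sum_{k_2=0}^{1}\cdots\sum_{k_n=0}^{n-1}\binom{0}{k_1}\binom{1}{k_2}\cdots\binom{n-1}{k_n}\prod_{1\le i<j\le n}\frac{\lambda_i-\lambda_j+k_i-k_j+j-i}{j-i}.$$
   Context: Let $[n]=\{1,\dots,n\}$. For a partition $\lambda$ with at most $n$ nonzero parts, identified with its Young diagram $\{(i,j):1\le j\le\lambda_i\}$ (row index $i$ increasing downward, column index $j$ to the right), a set-valued tableau of shape $\lambda$ with entries in $[n]$ assigns to each box $(i,j)$ a nonempty subset $T_{i,j}\subseteq[n]$ such that $\max T_{i,j}\le\min T_{i,j+1}$ and $\max T_{i,j}<\min T_{i+1,j}$ whenever these boxes exist. $\mathrm{SVT}(\lambda,n)$ denotes the set of all such tableaux. *)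

theory Defs
  imports "HOL-Analysis.Analysis"
begin

text \<open>A partition with at most n parts, given by its parts lam 1 >= ... >= lam n >= 0
  (indices 1..n; values outside 1..n are irrelevant).\<close>
definition is_partition_n :: "nat \<Rightarrow> (nat \<Rightarrow> nat) \<Rightarrow> bool" where
  "is_partition_n n lam \<longleftrightarrow> (\<forall>i. 1 \<le> i \<and> i < n \<longrightarrow> lam (Suc i) \<le> lam i)"

definition young_diagram :: "nat \<Rightarrow> (nat \<Rightarrow> nat) \<Rightarrow> (nat \<times> nat) set" where
  "young_diagram n lam = {(i, j). 1 \<le> i \<and> i \<le> n \<and> 1 \<le> j \<and> j \<le> lam i}"

definition SVT :: "(nat \<Rightarrow> nat) \<Rightarrow> nat \<Rightarrow> ((nat \<times> nat) \<Rightarrow> nat set) set" where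
  "SVT lam n = {T.
     (\<forall>b. b \<notin> young_diagram n lam \<longrightarrow> T b = {}) \<and>
     (\<forall>b\<in>young_diagram n lam. T b \<noteq> {} \<and> T b \<subseteq> {1..n}) \<and>
     (\<forall>i j. (i, j) \<in> young_diagram n lam \<and> (i, Suc j) \<in> young_diagram n lam
              \<longrightarrow> Max (T (i, j)) \<le> Min (T (i, Suc j))) \<and>
     (\<forall>i j. (i, j) \<in> young_diagram n lam \<and> (Suc i, j) \<in> young_diagram n lam
              \<longrightarrow> Max (T (i, j)) < Min (T (Suc i, j)))}"

end

theory Submission
  imports Defs "Jordan_Normal_Form.Determinant" "HOL-Library.FuncSet" "HOL-Computational_Algebra.Polynomial"
begin


lemma det_mat_def: "det (mat n n f) = (\<Sum>p\<in>{p. p permutes {0..<n}}. signof p * (\<Prod>i=0..<n. f (i, p i)))"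
  by (subst det_def'[of _ n]) auto

lemma det_rows_scale:
  "det (mat n n (\<lambda>(i,j). c i * f i j)) = (\<Prod>i<n. c i) * det (mat n n (\<lambda>(i,j). f i j))"
proof -
  have "det (mat n n (\<lambda>(i,j). c i * f i j)) =
     (\<Sum>p\<in>{p. p permutes {0..<n}}. (\<Prod>i<n. c i) * (signof p * (\<Prod>i=0..<n. f i (p i))))"
    unfolding det_mat_def
    by (rule sum.cong) (auto simp: prod.distrib atLeast0LessThan)
  also have "\<dots> = (\<Prod>i<n. c i) * det (mat n n (\<lambda>(i,j). f i j))"
    unfolding det_mat_def by (simp add: sum_distrib_left)
  finally show ?thesis .
qed

lemma prod_shift1: "(\<Prod>a<n. g (Suc a)) = (\<Prod>i\<in>{1..n}. g i)"
proof -
  have e: "Suc ` {..<n} = {1..n}"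
    by (simp only: lessThan_atLeast0 image_Suc_atLeastLessThan) (auto simp: atLeastLessThanSuc_atLeastAtMost)
  have "(\<Prod>a<n. g (Suc a)) = (\<Prod>i\<in>Suc ` {..<n}. g i)" by (subst prod.reindex) auto
  then show ?thesis by (simp add: e)
qed

lemma det_multilin:
  assumes fin: "\<And>i. i \<in> {1..n} \<Longrightarrow> finite (K i)"
  shows "det (mat n n (\<lambda>(a,b). \<Sum>k\<in>K (Suc a). c (Suc a) k * r (Suc a) k b)) =
    (\<Sum>f\<in>PiE {1..n} K. (\<Prod>i\<in>{1..n}. c i (f i)) * det (mat n n (\<lambda>(a,b). r (Suc a) (f (Suc a)) b)))"
proof -
  have "det (mat n n (\<lambda>(a,b). \<Sum>k\<in>K (Suc a). c (Suc a) k * r (Suc a) k b)) =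
    (\<Sum>p\<in>{p. p permutes {0..<n}}. signof p * (\<Prod>i\<in>{1..n}. \<Sum>k\<in>K i. c i k * r i k (p (i - 1))))"
    unfolding det_mat_def
  proof (rule sum.cong[OF refl])
    fix p :: "nat \<Rightarrow> nat"
    have "(\<Prod>i\<in>{1..n}. \<Sum>k\<in>K i. c i k * r i k (p (i - 1))) = (\<Prod>a<n. \<Sum>k\<in>K (Suc a). c (Suc a) k * r (Suc a) k (p a))"
      using prod_shift1[of "\<lambda>i. \<Sum>k\<in>K i. c i k * r i k (p (i - 1))" n] by simp
    then show "signof p * (\<Prod>i = 0..<n. (\<lambda>(a,b). \<Sum>k\<in>K (Suc a). c (Suc a) k * r (Suc a) k b) (i, p i)) =
         signof p * (\<Prod>i\<in>{1..n}. \<Sum>k\<in>K i. c i k * r i k (p (i - 1)))"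
      by (simp add: atLeast0LessThan)
  qed
  also have "\<dots> = (\<Sum>p\<in>{p. p permutes {0..<n}}. signof p * (\<Sum>f\<in>PiE {1..n} K. \<Prod>i\<in>{1..n}. c i (f i) * r i (f i) (p (i - 1))))"
    by (subst prod_sum_PiE) (auto simp: fin)
  also have "\<dots> = (\<Sum>f\<in>PiE {1..n} K. \<Sum>p\<in>{p. p permutes {0..<n}}. (\<Prod>i\<in>{1..n}. c i (f i)) * (signof p * (\<Prod>i\<in>{1..n}. r i (f i) (p (i - 1)))))"
  proof -
    have "signof p * (\<Sum>f\<in>PiE {1..n} K. \<Prod>i\<in>{1..n}. c i (f i) * r i (f i) (p (i - 1))) =
      (\<Sum>f\<in>PiE {1..n} K. (\<Prod>i\<in>{1..n}. c i (f i)) * (signof p * (\<Prod>i\<in>{1..n}. r i (f i) (p (i - 1)))))" for p :: "nat \<Rightarrow> nat"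
      unfolding sum_distrib_left by (rule sum.cong[OF refl]) (simp only: prod.distrib mult.left_commute)
    then have "(\<Sum>p\<in>{p. p permutes {0..<n}}. signof p * (\<Sum>f\<in>PiE {1..n} K. \<Prod>i\<in>{1..n}. c i (f i) * r i (f i) (p (i - 1)))) =
      (\<Sum>p\<in>{p. p permutes {0..<n}}. \<Sum>f\<in>PiE {1..n} K. (\<Prod>i\<in>{1..n}. c i (f i)) * (signof p * (\<Prod>i\<in>{1..n}. r i (f i) (p (i - 1)))))"
      by (intro sum.cong refl)
    also have "\<dots> = (\<Sum>f\<in>PiE {1..n} K. \<Sum>p\<in>{p. p permutes {0..<n}}. (\<Prod>i\<in>{1..n}. c i (f i)) * (signof p * (\<Prod>i\<in>{1..n}. r i (f i) (p (i - 1)))))"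
      by (rule sum.swap)
    finally show ?thesis .
  qed
  also have "\<dots> = (\<Sum>f\<in>PiE {1..n} K. (\<Prod>i\<in>{1..n}. c i (f i)) * det (mat n n (\<lambda>(a,b). r (Suc a) (f (Suc a)) b)))"
    unfolding det_mat_def
  proof (rule sum.cong[OF refl])
    fix f assume "f \<in> PiE {1..n} K"
    have e: "(\<Prod>i\<in>{1..n}. r i (f i) (p (i - 1))) = (\<Prod>a<n. r (Suc a) (f (Suc a)) (p a))" for p :: "nat \<Rightarrow> nat"
      using prod_shift1[of "\<lambda>i. r i (f i) (p (i - 1))" n] by simp
    show "(\<Sum>p\<in>{p. p permutes {0..<n}}. (\<Prod>i\<in>{1..n}. c i (f i)) * (signof p * (\<Prod>i\<in>{1..n}. r i (f i) (p (i - 1))))) =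
      (\<Prod>i\<in>{1..n}. c i (f i)) * (\<Sum>p\<in>{p. p permutes {0..<n}}. signof p * (\<Prod>i = 0..<n. (\<lambda>(a,b). r (Suc a) (f (Suc a)) b) (i, p i)))"
      unfolding e by (simp add: sum_distrib_left atLeast0LessThan)
  qed
  finally show ?thesis .
qed

lemma mat_mult_entry:
  assumes "i < n" "j < n"
  shows "(mat n n f * mat n n g) $$ (i,j) = (\<Sum>k<n. f (i,k) * g (k,j))"
  using assms by (simp add: scalar_prod_def atLeast0LessThan)

lemma det_mat_mult: "det (mat n n f * mat n n g) = det (mat n n f) * det (mat n n g)"
  by (rule det_mult) auto

definition pairs :: "nat \<Rightarrow> (nat \<times> nat) set" where
  "pairs n = {(i, j). 1 \<le> i \<and> i < j \<and> j \<le> n}"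

lemma finite_pairs: "finite (pairs n)"
  by (rule finite_subset[of _ "{1..n} \<times> {1..n}"]) (auto simp: pairs_def)

lemma pairs_Suc: "pairs (Suc n) = pairs n \<union> (\<lambda>i. (i, Suc n)) ` {1..n}"
  by (auto simp: pairs_def le_Suc_eq)

lemma prod_pairs_Suc:
  "(\<Prod>(i,j)\<in>pairs (Suc n). g i j) = (\<Prod>(i,j)\<in>pairs n. g i j) * (\<Prod>i\<in>{1..n}. g i (Suc n))"
proof -
  have d: "pairs n \<inter> (\<lambda>i. (i, Suc n)) ` {1..n} = {}" by (auto simp: pairs_def)
  have "(\<Prod>(i,j)\<in>pairs (Suc n). g i j) = (\<Prod>(i,j)\<in>pairs n. g i j) * (\<Prod>(i,j)\<in>(\<lambda>i. (i, Suc n)) ` {1..n}. g i j)"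
    unfolding pairs_Suc by (rule prod.union_disjoint) (use d finite_pairs in auto)
  also have "(\<Prod>(i,j)\<in>(\<lambda>i. (i, Suc n)) ` {1..n}. g i j) = (\<Prod>i\<in>{1..n}. g i (Suc n))"
    by (subst prod.reindex) (auto simp: inj_on_def)
  finally show ?thesis .
qed

lemma vandermonde:
  fixes y :: "nat \<Rightarrow> real"
  shows "det (mat n n (\<lambda>(a,b). y (Suc a) ^ (n - 1 - b))) = (\<Prod>(i,j)\<in>pairs n. y i - y j)"
proof (induction n)
  case 0
  have "pairs 0 = {}" by (auto simp: pairs_def)
  then show ?case by (simp add: det_mat_def)
next
  case (Suc n)
  define M where "M = mat (Suc n) (Suc n) (\<lambda>(a,b). y (Suc a) ^ (n - b))"
  define U where "U = mat (Suc n) (Suc n) (\<lambda>(k,j). if k = j then 1 else if k = Suc j then - y (Suc n) else (0::real))"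
  define R where "R = mat n n (\<lambda>(a,b). (y (Suc a) - y (Suc n)) * y (Suc a) ^ (n - 1 - b))"
  have MU: "(M * U) $$ (i,j) = (if j < n then y (Suc i) ^ (n - j) - y (Suc n) * y (Suc i) ^ (n - Suc j) else 1)"
    if "i < Suc n" "j < Suc n" for i j
  proof -
    have "(M * U) $$ (i,j) = (\<Sum>k<Suc n. (if k = j then y (Suc i) ^ (n - k) else 0) + (if k = Suc j then - y (Suc n) * y (Suc i) ^ (n - k) else 0))"
      unfolding M_def U_def using that by (subst mat_mult_entry) (auto intro!: sum.cong)
    also have "\<dots> = (\<Sum>k<Suc n. if k = j then y (Suc i) ^ (n - k) else 0) + (\<Sum>k<Suc n. if k = Suc j then - y (Suc n) * y (Suc i) ^ (n - k) else 0)"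
      by (rule sum.distrib)
    also have "\<dots> = (if j < n then y (Suc i) ^ (n - j) - y (Suc n) * y (Suc i) ^ (n - Suc j) else 1)"
      using that by (simp add: sum.delta')
    finally show ?thesis .
  qed
  have detU: "det U = 1"
    unfolding U_def
    by (subst det_lower_triangular[of "Suc n"]) (auto simp: prod_list_diag_prod)
  have "det M = det (M * U)" unfolding M_def U_def by (simp add: det_mat_mult detU[unfolded U_def])
  also have "det (M * U) = (\<Sum>j<Suc n. (M * U) $$ (n,j) * cofactor (M * U) n j)"
    by (rule laplace_expansion_row[of _ "Suc n"]) (auto simp: M_def U_def)
  also have "\<dots> = cofactor (M * U) n n"
  proof -
    have z: "y (Suc n) ^ (n - j) - y (Suc n) * y (Suc n) ^ (n - Suc j) = 0" if "j < n" for j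
      using that by (simp add: power_Suc[symmetric] Suc_diff_Suc)
    show ?thesis using MU by (simp add: lessThan_Suc z)
  qed
  also have "\<dots> = det R"
  proof -
    have h: "a ^ (n - j) - b * a ^ (n - Suc j) = (a - b) * a ^ (n - 1 - j)" if "j < n" for a b :: real and j
    proof -
      have e: "n - j = Suc (n - Suc j)" using that by (simp add: Suc_diff_Suc)
      show ?thesis unfolding e by (simp add: algebra_simps)
    qed
    have "mat_delete (M * U) n n = R"
    proof (rule eq_matI)
      fix i j assume ij: "i < dim_row R" "j < dim_col R"
      then have "mat_delete (M * U) n n $$ (i, j) = (M * U) $$ (i,j)"
        by (simp add: mat_delete_def R_def M_def U_def)
      also have "\<dots> = R $$ (i,j)" using ij by (simp add: MU R_def h)
      finally show "mat_delete (M * U) n n $$ (i, j) = R $$ (i,j)" .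
    qed (auto simp: R_def mat_delete_def M_def U_def)
    then show ?thesis unfolding cofactor_def by simp
  qed
  also have "det R = (\<Prod>a<n. y (Suc a) - y (Suc n)) * det (mat n n (\<lambda>(a,b). y (Suc a) ^ (n - 1 - b)))"
    unfolding R_def by (rule det_rows_scale)
  also have "\<dots> = (\<Prod>a<n. y (Suc a) - y (Suc n)) * (\<Prod>(i,j)\<in>pairs n. y i - y j)"
    by (simp only: Suc.IH)
  also have "\<dots> = (\<Prod>(i,j)\<in>pairs (Suc n). y i - y j)"
    by (simp add: prod_pairs_Suc prod_shift1[of "\<lambda>i. y i - y (Suc n)"])
  finally show ?case by (simp add: M_def)
qed

definition gbp :: "nat \<Rightarrow> real poly" where
  "gbp m = Polynomial.smult (1 / fact m) (\<Prod>i\<in>{0..<m}. [:- of_nat i, 1:])"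

lemma poly_gbp: "poly (gbp m) x = x gchoose m"
proof -
  have "fact m * (x gchoose m) = (\<Prod>i = 0..<m. x - of_nat i)" by (rule gbinomial_mult_fact)
  then show ?thesis by (simp add: gbp_def poly_prod field_simps)
qed

lemma degree_gbp: "degree (gbp m) = m"
proof -
  have "degree (\<Prod>i\<in>{0..<m}. [:- of_nat i, 1::real:]) = (\<Sum>i\<in>{0..<m}. degree [:- of_nat i, 1::real:])"
    by (rule degree_prod_eq_sum_degree) auto
  then show ?thesis by (simp add: gbp_def)
qed

lemma lead_gbp: "coeff (gbp m) m = 1 / fact m"
proof -
  have "lead_coeff (\<Prod>i\<in>{0..<m}. [:- of_nat i, 1::real:]) = 1"
    by (simp add: lead_coeff_prod)
  moreover have "degree (\<Prod>i\<in>{0..<m}. [:- of_nat i, 1::real:]) = m"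
    using degree_gbp[of m] by (simp add: gbp_def)
  ultimately show ?thesis by (simp add: gbp_def)
qed

lemma poly_sum_lessThan:
  fixes p :: "real poly"
  assumes "degree p < n"
  shows "poly p x = (\<Sum>d<n. coeff p d * x ^ d)"
proof -
  have "poly p x = (\<Sum>d\<le>degree p. coeff p d * x ^ d)" by (rule poly_altdef)
  also have "\<dots> = (\<Sum>d<n. coeff p d * x ^ d)"
    by (rule sum.mono_neutral_left) (use assms in \<open>auto simp: coeff_eq_0\<close>)
  finally show ?thesis .
qed

lemma det_gchoose:
  fixes y :: "nat \<Rightarrow> real"
  shows "det (mat n n (\<lambda>(a,b). y (Suc a) gchoose (n - 1 - b))) =
     (\<Prod>(i,j)\<in>pairs n. y i - y j) / (\<Prod>b<n. fact b)"
proof -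
  define V where "V = mat n n (\<lambda>(a,k). y (Suc a) ^ (n - 1 - k))"
  define C where "C = mat n n (\<lambda>(k,b). coeff (gbp (n - 1 - b)) (n - 1 - k))"
  have VC: "V * C = mat n n (\<lambda>(a,b). y (Suc a) gchoose (n - 1 - b))"
  proof (rule eq_matI)
    fix a b assume ab: "a < dim_row (mat n n (\<lambda>(a,b). y (Suc a) gchoose (n - 1 - b)))"
       "b < dim_col (mat n n (\<lambda>(a,b). y (Suc a) gchoose (n - 1 - b)))"
    then have ab': "a < n" "b < n" by auto
    have "(V * C) $$ (a,b) = (\<Sum>k<n. y (Suc a) ^ (n - 1 - k) * coeff (gbp (n - 1 - b)) (n - 1 - k))"
      unfolding V_def C_def using ab' by (subst mat_mult_entry) auto
    also have "\<dots> = (\<Sum>d<n. coeff (gbp (n - 1 - b)) d * y (Suc a) ^ d)"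
      using sum.atLeastLessThan_rev[of "\<lambda>d. coeff (gbp (n - 1 - b)) d * y (Suc a) ^ d" 0 n]
      by (simp add: atLeast0LessThan mult.commute)
    also have "\<dots> = poly (gbp (n - 1 - b)) (y (Suc a))"
      by (rule poly_sum_lessThan[symmetric]) (use ab' in \<open>simp add: degree_gbp\<close>)
    finally show "(V * C) $$ (a,b) = mat n n (\<lambda>(a,b). y (Suc a) gchoose (n - 1 - b)) $$ (a,b)"
      using ab' by (simp add: poly_gbp)
  qed (auto simp: V_def C_def)
  have detC: "det C = (\<Prod>b<n. 1 / fact (n - 1 - b))"
    unfolding C_def
  proof (subst det_lower_triangular[of n])
    show "\<And>i j. i < j \<Longrightarrow> j < n \<Longrightarrow> mat n n (\<lambda>(k,b). coeff (gbp (n - 1 - b)) (n - 1 - k)) $$ (i,j) = 0"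
      by (simp add: coeff_eq_0 degree_gbp)
  qed (auto simp: prod_list_diag_prod lead_gbp atLeast0LessThan)
  have pf: "(\<Prod>b<n. 1 / fact (n - 1 - b) :: real) = 1 / (\<Prod>b<n. fact b)"
  proof -
    have "(\<Prod>b<n. fact (n - 1 - b) :: real) = (\<Prod>b<n. fact b)"
      using prod.atLeastLessThan_rev[of "\<lambda>b. fact b :: real" 0 n]
      by (simp add: atLeast0LessThan)
    then show ?thesis by (simp add: prod_dividef)
  qed
  have "det (mat n n (\<lambda>(a,b). y (Suc a) gchoose (n - 1 - b))) = det V * det C"
    unfolding VC[symmetric] V_def C_def by (rule det_mat_mult)
  also have "\<dots> = (\<Prod>(i,j)\<in>pairs n. y i - y j) / (\<Prod>b<n. fact b)"
    unfolding V_def detC pf vandermonde by simp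
  finally show ?thesis .
qed



fun hh :: "nat \<Rightarrow> nat \<Rightarrow> nat \<Rightarrow> nat" where
  "hh 0 q x = x choose q"
| "hh (Suc i) q x = hh i q x + hh i q (Suc x)"

lemma hh_Suc_x: "hh i (Suc q) (Suc x) = hh i (Suc q) x + hh i q x"
  by (induction i arbitrary: x) auto

lemma hh_0: "hh i 0 x = 2 ^ i"
  by (induction i arbitrary: x) auto

lemma binom_sum_Suc:
  fixes g :: "nat \<Rightarrow> nat"
  shows "(\<Sum>k\<le>Suc i. (Suc i choose k) * g k) = (\<Sum>k\<le>i. (i choose k) * g k) + (\<Sum>k\<le>i. (i choose k) * g (Suc k))"
proof -
  have 1: "(\<Sum>k\<le>Suc i. (Suc i choose k) * g k) = g 0 + (\<Sum>k\<le>i. (i choose k) * g (Suc k)) + (\<Sum>k\<le>i. (i choose Suc k) * g (Suc k))"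
    by (subst sum.atMost_Suc_shift) (simp add: sum.distrib algebra_simps)
  have 2: "(\<Sum>k\<le>Suc i. (i choose k) * g k) = g 0 + (\<Sum>k\<le>i. (i choose Suc k) * g (Suc k))"
    by (subst sum.atMost_Suc_shift) simp
  have 3: "(\<Sum>k\<le>Suc i. (i choose k) * g k) = (\<Sum>k\<le>i. (i choose k) * g k)"
    by simp
  show ?thesis using 1 2 3 by simp
qed

lemma hh_sum: "hh i q x = (\<Sum>k\<le>i. (i choose k) * ((x + k) choose q))"
proof (induction i arbitrary: x)
  case 0
  then show ?case by simp
next
  case (Suc i)
  show ?case using binom_sum_Suc[of i "\<lambda>k. (x + k) choose q"] by (simp add: Suc.IH)
qed

lemma hh_weighted:
  assumes "L \<le> U"
  shows "(\<Sum>v\<in>{L..U}. (if L < v then 2 else 1) * hh i q (v + c)) + hh (Suc i) (Suc q) (L + c)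
     = 2 * hh i (Suc q) (Suc (U + c))"
  using assms
proof (induction U rule: dec_induct)
  case base
  then show ?case by (simp add: hh_Suc_x)
next
  case (step U)
  have "{L..Suc U} = insert (Suc U) {L..U}" using step by auto
  then have "(\<Sum>v\<in>{L..Suc U}. (if L < v then 2 else 1) * hh i q (v + c)) =
     2 * hh i q (Suc U + c) + (\<Sum>v\<in>{L..U}. (if L < v then 2 else 1) * hh i q (v + c))"
    using step by simp
  then show ?case using step.IH by (simp add: hh_Suc_x)
qed

definition detF :: "nat \<Rightarrow> (nat \<Rightarrow> nat) \<Rightarrow> real" where
  "detF n lam = det (mat n n (\<lambda>(a,b). real (hh a (n - 1 - b) (lam (Suc a) + n - 1 - a))))"

lemma detF_0: "detF 0 lam = 1"
  by (simp add: detF_def det_mat_def)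

lemma det_step:
  fixes A :: "nat \<Rightarrow> nat \<Rightarrow> real"
  assumes col: "\<And>a. a < Suc m \<Longrightarrow> A a m = 2 ^ a"
  shows "det (mat (Suc m) (Suc m) (\<lambda>(a,b). A a b)) = det (mat m m (\<lambda>(a,b). 2 * A a b - A (Suc a) b))"
proof -
  define T where "T = mat (Suc m) (Suc m) (\<lambda>(i,k). if k = i then (if i < m then 2 else 1) else if k = Suc i then -1 else (0::real))"
  define AA where "AA = mat (Suc m) (Suc m) (\<lambda>(a,b). A a b)"
  have TA: "(T * AA) $$ (i,j) = (if i < m then 2 * A i j - A (Suc i) j else A i j)"
    if "i < Suc m" "j < Suc m" for i j
  proof -
    have "(T * AA) $$ (i,j) = (\<Sum>k<Suc m. (if k = i then (if i < m then 2 else 1) * A k j else 0) + (if k = Suc i then - A k j else 0))"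
      unfolding T_def AA_def using that by (subst mat_mult_entry) (auto intro!: sum.cong)
    also have "\<dots> = (\<Sum>k<Suc m. if k = i then (if i < m then 2 else 1) * A k j else 0) + (\<Sum>k<Suc m. if k = Suc i then - A k j else 0)"
      by (rule sum.distrib)
    also have "\<dots> = (if i < m then 2 * A i j - A (Suc i) j else A i j)"
      using that by (cases "i = m") (auto simp: sum.delta')
    finally show ?thesis .
  qed
  have detT: "det T = 2 ^ m"
  proof -
    have "det T = prod_list (diag_mat T)"
      by (rule det_upper_triangular[of _ "Suc m"]) (auto simp: T_def upper_triangular_def)
    also have "\<dots> = (\<Prod>i<Suc m. if i < m then 2 else 1)"
      by (simp add: prod_list_diag_prod T_def atLeast0LessThan)
    also have "\<dots> = 2 ^ m" by (simp add: lessThan_Suc)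
    finally show ?thesis .
  qed
  have "2 ^ m * det AA = det (T * AA)"
    unfolding T_def AA_def by (simp add: det_mat_mult detT[unfolded T_def])
  also have "det (T * AA) = (\<Sum>i<Suc m. (T * AA) $$ (i,m) * cofactor (T * AA) i m)"
    by (rule laplace_expansion_column[of _ "Suc m"]) (auto simp: T_def AA_def)
  also have "\<dots> = 2 ^ m * cofactor (T * AA) m m"
  proof -
    have z: "(T * AA) $$ (i,m) = 0" if "i < m" for i
      using that by (simp add: TA col)
    show ?thesis by (simp add: lessThan_Suc z TA col)
  qed
  also have "cofactor (T * AA) m m = det (mat m m (\<lambda>(a,b). 2 * A a b - A (Suc a) b))"
  proof -
    have "mat_delete (T * AA) m m = mat m m (\<lambda>(a,b). 2 * A a b - A (Suc a) b)"
    proof (rule eq_matI)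
      fix i j assume ij: "i < dim_row (mat m m (\<lambda>(a,b). 2 * A a b - A (Suc a) b))"
        "j < dim_col (mat m m (\<lambda>(a,b). 2 * A a b - A (Suc a) b))"
      then have "mat_delete (T * AA) m m $$ (i, j) = (T * AA) $$ (i,j)"
        by (simp add: mat_delete_def T_def AA_def)
      also have "\<dots> = mat m m (\<lambda>(a,b). 2 * A a b - A (Suc a) b) $$ (i,j)" using ij by (simp add: TA)
      finally show "mat_delete (T * AA) m m $$ (i, j) = mat m m (\<lambda>(a,b). 2 * A a b - A (Suc a) b) $$ (i,j)" .
    qed (auto simp: T_def AA_def mat_delete_def)
    then show ?thesis unfolding cofactor_def by simp
  qed
  finally show ?thesis unfolding AA_def by simp
qed

lemma detF_rec:
  assumes part: "\<And>i. 1 \<le> i \<Longrightarrow> i \<le> m \<Longrightarrow> lam (Suc i) \<le> lam i"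
  shows "detF (Suc m) lam = (\<Sum>f\<in>PiE {1..m} (\<lambda>i. {lam (Suc i)..lam i}).
      (\<Prod>i\<in>{1..m}. (if lam (Suc i) < f i then 2 else 1)) * detF m f)"
proof -
  define A where "A = (\<lambda>a b. real (hh a (m - b) (lam (Suc a) + m - a)))"
  have "detF (Suc m) lam = det (mat (Suc m) (Suc m) (\<lambda>(a,b). A a b))"
    unfolding detF_def A_def by simp
  also have "\<dots> = det (mat m m (\<lambda>(a,b). 2 * A a b - A (Suc a) b))"
    by (rule det_step) (simp add: A_def hh_0)
  also have "mat m m (\<lambda>(a,b). 2 * A a b - A (Suc a) b) =
     mat m m (\<lambda>(a,b). \<Sum>v\<in>{lam (Suc (Suc a))..lam (Suc a)}. (if lam (Suc (Suc a)) < v then 2 else 1) *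
        real (hh (Suc a - 1) (m - 1 - b) (v + m - Suc a)))"
  proof (rule eq_matI)
    fix a b assume ab: "a < dim_row (mat m m (\<lambda>(a,b). \<Sum>v\<in>{lam (Suc (Suc a))..lam (Suc a)}. (if lam (Suc (Suc a)) < v then 2 else 1) *
        real (hh (Suc a - 1) (m - 1 - b) (v + m - Suc a))))"
      "b < dim_col (mat m m (\<lambda>(a,b). \<Sum>v\<in>{lam (Suc (Suc a))..lam (Suc a)}. (if lam (Suc (Suc a)) < v then 2 else 1) *
        real (hh (Suc a - 1) (m - 1 - b) (v + m - Suc a))))"
    then have a: "a < m" and b: "b < m" by auto
    have LU: "lam (Suc (Suc a)) \<le> lam (Suc a)" using part[of "Suc a"] a by simp
    have e1: "m - b = Suc (m - 1 - b)" using b by simp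
    have e2: "lam (Suc a) + m - a = Suc (lam (Suc a) + (m - 1 - a))" using a by simp
    have e3: "lam (Suc (Suc a)) + m - Suc a = lam (Suc (Suc a)) + (m - 1 - a)" using a by simp
    have key: "(\<Sum>v\<in>{lam (Suc (Suc a))..lam (Suc a)}. (if lam (Suc (Suc a)) < v then 2 else 1) * hh a (m - 1 - b) (v + (m - 1 - a)))
       + hh (Suc a) (Suc (m - 1 - b)) (lam (Suc (Suc a)) + (m - 1 - a)) = 2 * hh a (Suc (m - 1 - b)) (Suc (lam (Suc a) + (m - 1 - a)))"
      by (rule hh_weighted[OF LU])
    have "2 * A a b - A (Suc a) b = real (\<Sum>v\<in>{lam (Suc (Suc a))..lam (Suc a)}. (if lam (Suc (Suc a)) < v then 2 else 1) * hh a (m - 1 - b) (v + (m - 1 - a)))"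
      unfolding A_def e1 e2 e3 using arg_cong[OF key, of real] by simp
    also have "\<dots> = (\<Sum>v\<in>{lam (Suc (Suc a))..lam (Suc a)}. (if lam (Suc (Suc a)) < v then 2 else 1) *
        real (hh (Suc a - 1) (m - 1 - b) (v + m - Suc a)))"
      using a by (auto simp add: of_nat_sum intro!: sum.cong)
    finally show "mat m m (\<lambda>(a,b). 2 * A a b - A (Suc a) b) $$ (a,b) = mat m m (\<lambda>(a,b). \<Sum>v\<in>{lam (Suc (Suc a))..lam (Suc a)}. (if lam (Suc (Suc a)) < v then 2 else 1) *
        real (hh (Suc a - 1) (m - 1 - b) (v + m - Suc a))) $$ (a,b)"
      using a b by simp
  qed auto
  also have "det \<dots> = (\<Sum>f\<in>PiE {1..m} (\<lambda>i. {lam (Suc i)..lam i}).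
      (\<Prod>i\<in>{1..m}. (if lam (Suc i) < f i then 2 else 1)) *
      det (mat m m (\<lambda>(a,b). real (hh (Suc a - 1) (m - 1 - b) (f (Suc a) + m - Suc a)))))"
    by (rule det_multilin[where c="\<lambda>i v. if lam (Suc i) < v then 2 else 1"
          and r="\<lambda>i v b. real (hh (i - 1) (m - 1 - b) (v + m - i))" and K="\<lambda>i. {lam (Suc i)..lam i}"]) auto
  also have "\<dots> = (\<Sum>f\<in>PiE {1..m} (\<lambda>i. {lam (Suc i)..lam i}).
      (\<Prod>i\<in>{1..m}. (if lam (Suc i) < f i then 2 else 1)) * detF m f)"
    unfolding detF_def by (simp add: diff_diff_left)
  finally show ?thesis .
qed

lemma prod_pairs_diff: "(\<Prod>(i,j)\<in>pairs n. real (j - i)) = (\<Prod>b<n. fact b)"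
proof (induction n)
  case 0
  have "pairs 0 = {}" by (auto simp: pairs_def)
  then show ?case by simp
next
  case (Suc n)
  have "(\<Prod>i\<in>{1..n}. real (Suc n - i)) = (\<Prod>a<n. real (Suc n - Suc a))"
    by (rule prod_shift1[symmetric])
  also have "\<dots> = fact n" by (simp add: fact_prod_rev atLeast0LessThan)
  finally have "(\<Prod>i\<in>{1..n}. real (Suc n - i)) = fact n" .
  then show ?case by (simp add: prod_pairs_Suc Suc.IH)
qed

lemma rhs_det:
  "(\<Sum>k\<in>PiE {1..n} (\<lambda>i. {0..i - 1}).
       (\<Prod>i\<in>{1..n}. real ((i - 1) choose k i)) *
       (\<Prod>(i, j)\<in>{(i, j). 1 \<le> i \<and> i < j \<and> j \<le> n}.
          (real_of_int (int (lam i) - int (lam j) + int (k i) - int (k j) + int j - int i))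
          / real (j - i))) = detF n lam"
proof -
  have inner: "(\<Prod>(i, j)\<in>{(i, j). 1 \<le> i \<and> i < j \<and> j \<le> n}.
          (real_of_int (int (lam i) - int (lam j) + int (k i) - int (k j) + int j - int i))
          / real (j - i)) = det (mat n n (\<lambda>(a,b). real ((lam (Suc a) + k (Suc a) + n - Suc a) choose (n - 1 - b))))"
    for k :: "nat \<Rightarrow> nat"
  proof -
    define y where "y = (\<lambda>i. real (lam i + k i + n - i))"
    have "(\<Prod>(i, j)\<in>{(i, j). 1 \<le> i \<and> i < j \<and> j \<le> n}.
          (real_of_int (int (lam i) - int (lam j) + int (k i) - int (k j) + int j - int i))
          / real (j - i)) = (\<Prod>(i, j)\<in>pairs n. (y i - y j) / real (j - i))"
      unfolding pairs_def[symmetric]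
      by (rule prod.cong[OF refl]) (auto simp: pairs_def y_def of_nat_diff)
    also have "\<dots> = (\<Prod>(i, j)\<in>pairs n. y i - y j) / (\<Prod>(i, j)\<in>pairs n. real (j - i))"
      by (simp add: prod_dividef case_prod_unfold)
    also have "\<dots> = det (mat n n (\<lambda>(a,b). y (Suc a) gchoose (n - 1 - b)))"
      by (subst det_gchoose) (simp only: prod_pairs_diff)
    also have "\<dots> = det (mat n n (\<lambda>(a,b). real ((lam (Suc a) + k (Suc a) + n - Suc a) choose (n - 1 - b))))"
      by (simp add: y_def binomial_gbinomial)
    finally show ?thesis .
  qed
  have "detF n lam = det (mat n n (\<lambda>(a,b). \<Sum>k\<in>{0..Suc a - 1}. real ((Suc a - 1) choose k) *
      real ((lam (Suc a) + k + n - Suc a) choose (n - 1 - b))))"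
    unfolding detF_def
  proof (rule arg_cong[of _ _ det], rule eq_matI)
    fix a b assume ab: "a < dim_row (mat n n (\<lambda>(a,b). \<Sum>k\<in>{0..Suc a - 1}. real ((Suc a - 1) choose k) *
      real ((lam (Suc a) + k + n - Suc a) choose (n - 1 - b))))"
      "b < dim_col (mat n n (\<lambda>(a,b). \<Sum>k\<in>{0..Suc a - 1}. real ((Suc a - 1) choose k) *
      real ((lam (Suc a) + k + n - Suc a) choose (n - 1 - b))))"
    then have a: "a < n" and b: "b < n" by auto
    have e: "lam (Suc a) + k + n - Suc a = lam (Suc a) + n - 1 - a + k" for k using a by simp
    show "mat n n (\<lambda>(a,b). real (hh a (n - 1 - b) (lam (Suc a) + n - 1 - a))) $$ (a,b) =
      mat n n (\<lambda>(a,b). \<Sum>k\<in>{0..Suc a - 1}. real ((Suc a - 1) choose k) *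
      real ((lam (Suc a) + k + n - Suc a) choose (n - 1 - b)))  $$ (a,b)"
      using a b by (simp add: hh_sum e of_nat_sum atMost_atLeast0)
  qed auto
  also have "\<dots> = (\<Sum>k\<in>PiE {1..n} (\<lambda>i. {0..i - 1}).
       (\<Prod>i\<in>{1..n}. real ((i - 1) choose k i)) *
       det (mat n n (\<lambda>(a,b). real ((lam (Suc a) + k (Suc a) + n - Suc a) choose (n - 1 - b)))))"
    by (rule det_multilin[where c="\<lambda>i k. real ((i - 1) choose k)"
          and r="\<lambda>i k b. real ((lam i + k + n - i) choose (n - 1 - b))" and K="\<lambda>i. {0..i-1}"]) auto
  finally have fin: "detF n lam = (\<Sum>k\<in>PiE {1..n} (\<lambda>i. {0..i - 1}).
       (\<Prod>i\<in>{1..n}. real ((i - 1) choose k i)) *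
       det (mat n n (\<lambda>(a,b). real ((lam (Suc a) + k (Suc a) + n - Suc a) choose (n - 1 - b)))))" .
  show ?thesis unfolding inner by (rule fin[symmetric])
qed



lemma Yd[simp]: "(i,j) \<in> young_diagram n lam \<longleftrightarrow> 1 \<le> i \<and> i \<le> n \<and> 1 \<le> j \<and> j \<le> lam i"
  by (simp add: young_diagram_def)

lemma part_mono:
  assumes "is_partition_n n lam" "1 \<le> i" "i \<le> i'" "i' \<le> n"
  shows "lam i' \<le> lam i"
  using assms(3,4)
proof (induction i' rule: dec_induct)
  case base then show ?case by simp
next
  case (step k)
  then have "lam (Suc k) \<le> lam k" using assms(1,2) unfolding is_partition_n_def by auto
  then show ?case using step by simp
qed

lemma finite_Y: "finite (young_diagram n lam)"
proof -
  have "young_diagram n lam = (SIGMA i:{1..n}. {1..lam i})" by auto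
  then show ?thesis by simp
qed

lemma finite_SVT: "finite (SVT lam n)"
proof -
  have "SVT lam n \<subseteq> {T. \<forall>b. (b \<in> young_diagram n lam \<longrightarrow> T b \<in> Pow {1..n}) \<and> (b \<notin> young_diagram n lam \<longrightarrow> T b = {})}"
    unfolding SVT_def by auto
  moreover have "finite {T. \<forall>b. (b \<in> young_diagram n lam \<longrightarrow> T b \<in> Pow {1..n}) \<and> (b \<notin> young_diagram n lam \<longrightarrow> T b = {})}"
    by (rule finite_set_of_finite_funs) (auto simp: finite_Y)
  ultimately show ?thesis by (rule finite_subset)
qed

lemma downclosed_eq:
  assumes "finite A" "A \<subseteq> {1..}" "\<And>j j'. j \<in> A \<Longrightarrow> 1 \<le> j' \<Longrightarrow> j' \<le> j \<Longrightarrow> j' \<in> A"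
  shows "A = {1..card A}"
proof (cases "A = {}")
  case True then show ?thesis by simp
next
  case False
  define M where "M = Max A"
  have MA: "M \<in> A" using False assms(1) by (simp add: M_def)
  have "A = {1..M}"
  proof
    show "A \<subseteq> {1..M}" using assms(1,2) by (auto simp: M_def)
    show "{1..M} \<subseteq> A" using MA assms(3) by auto
  qed
  then show ?thesis by simp
qed

context
  fixes lam :: "nat \<Rightarrow> nat" and m :: nat and T :: "nat \<times> nat \<Rightarrow> nat set"
  assumes part: "is_partition_n (Suc m) lam" and svt: "T \<in> SVT lam (Suc m)"
begin

lemma T_out: "b \<notin> young_diagram (Suc m) lam \<Longrightarrow> T b = {}"
  using svt unfolding SVT_def by blast

lemma T_in: "b \<in> young_diagram (Suc m) lam \<Longrightarrow> T b \<noteq> {} \<and> T b \<subseteq> {1..Suc m}"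
  using svt unfolding SVT_def by auto

lemma T_fin: "finite (T b)"
proof (cases "b \<in> young_diagram (Suc m) lam")
  case True
  then show ?thesis using T_in finite_subset[of "T b" "{1..Suc m}"] by auto
next
  case False
  then show ?thesis using T_out by simp
qed

lemma T_le: "x \<in> T b \<Longrightarrow> 1 \<le> x \<and> x \<le> Suc m"
proof (cases "b \<in> young_diagram (Suc m) lam")
  case True
  show "x \<in> T b \<Longrightarrow> 1 \<le> x \<and> x \<le> Suc m"
  proof -
    assume x: "x \<in> T b"
    have "x \<in> {1..Suc m}" using T_in[OF True] x by blast
    then show ?thesis by simp
  qed
next
  case False
  then show "x \<in> T b \<Longrightarrow> 1 \<le> x \<and> x \<le> Suc m" using T_out by simp
qed

lemma T_row: "(i,j) \<in> young_diagram (Suc m) lam \<Longrightarrow> (i,Suc j) \<in> young_diagram (Suc m) lam \<Longrightarrow> Max (T (i,j)) \<le> Min (T (i,Suc j))"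
  using svt unfolding SVT_def by blast

lemma T_col: "(i,j) \<in> young_diagram (Suc m) lam \<Longrightarrow> (Suc i,j) \<in> young_diagram (Suc m) lam \<Longrightarrow> Max (T (i,j)) < Min (T (Suc i,j))"
  using svt unfolding SVT_def by blast

lemma T_minmax: "b \<in> young_diagram (Suc m) lam \<Longrightarrow> Min (T b) \<le> Max (T b)"
proof -
  assume b: "b \<in> young_diagram (Suc m) lam"
  have "Min (T b) \<in> T b" using T_in[OF b] T_fin by simp
  then show ?thesis using Max_ge T_fin by blast
qed

lemma T_row_mono:
  assumes "(i,j) \<in> young_diagram (Suc m) lam" "(i,j') \<in> young_diagram (Suc m) lam" "j < j'"
  shows "Max (T (i,j)) \<le> Min (T (i,j'))"
proof -
  have "Suc j \<le> j'" using assms(3) by simp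
  then show ?thesis using assms(2)
  proof (induction j' rule: dec_induct)
    case base then show ?case using assms(1) T_row by blast
  next
    case (step k)
    have k: "(i,k) \<in> young_diagram (Suc m) lam" using step assms(1) by auto
    have "Max (T (i,j)) \<le> Min (T (i,k))" using step.IH k by blast
    also have "\<dots> \<le> Max (T (i,k))" using T_minmax k by blast
    also have "\<dots> \<le> Min (T (i, Suc k))" using T_row k step.prems by blast
    finally show ?case .
  qed
qed

lemma T_N_Max: "Suc m \<in> T b \<Longrightarrow> Max (T b) = Suc m"
  by (rule Max_eqI) (use T_fin T_le in auto)

lemma T_all_N:
  assumes "Suc m \<le> Min (T b)" "T b \<noteq> {}"
  shows "T b = {Suc m}"
proof -
  have "x = Suc m" if x: "x \<in> T b" for x
  proof -
    have "Min (T b) \<le> x" using T_fin x by (rule Min_le)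
    then show ?thesis using T_le[OF x] assms(1) by linarith
  qed
  then show ?thesis using assms(2) by blast
qed

lemma T_N_right:
  assumes "Suc m \<in> T (i,j)" "(i,j') \<in> young_diagram (Suc m) lam" "j < j'"
  shows "T (i,j') = {Suc m}"
proof -
  have ij: "(i,j) \<in> young_diagram (Suc m) lam" using assms(1) T_out by blast
  have "Suc m \<le> Min (T (i,j'))" using T_row_mono[OF ij assms(2,3)] T_N_Max[OF assms(1)] by simp
  moreover have "T (i,j') \<noteq> {}" using T_in assms(2) by blast
  ultimately show ?thesis by (rule T_all_N)
qed

lemma T_N_below:
  assumes "Suc m \<in> T (i,j)"
  shows "(Suc i,j) \<notin> young_diagram (Suc m) lam"
proof
  assume a: "(Suc i,j) \<in> young_diagram (Suc m) lam"
  have ij: "(i,j) \<in> young_diagram (Suc m) lam" using assms(1) T_out by blast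
  have "Suc m < Min (T (Suc i,j))" using T_col[OF ij a] T_N_Max[OF assms(1)] by simp
  moreover have "Min (T (Suc i,j)) \<in> T (Suc i, j)" using T_in[OF a] T_fin by simp
  ultimately show False using T_le by fastforce
qed

lemma T_min_ge: "(i,j) \<in> young_diagram (Suc m) lam \<Longrightarrow> i \<le> Min (T (i,j))"
proof (induction i)
  case 0 then show ?case by simp
next
  case (Suc i)
  show ?case
  proof (cases "i = 0")
    case True
    have "Min (T (Suc i,j)) \<in> T (Suc i, j)" using T_in[OF Suc.prems] T_fin by simp
    then show ?thesis using T_le True by fastforce
  next
    case False
    have "lam (Suc i) \<le> lam i" using part False Suc.prems unfolding is_partition_n_def by auto
    then have ij: "(i,j) \<in> young_diagram (Suc m) lam" using Suc.prems False by auto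
    have "i \<le> Min (T (i,j))" using Suc.IH ij by blast
    also have "\<dots> \<le> Max (T (i,j))" using T_minmax ij by blast
    also have "\<dots> < Min (T (Suc i,j))" using T_col ij Suc.prems by blast
    finally show ?thesis by simp
  qed
qed

lemma T_last_row:
  assumes "(Suc m,j) \<in> young_diagram (Suc m) lam"
  shows "T (Suc m,j) = {Suc m}"
proof -
  have "Suc m \<le> Min (T (Suc m,j))" using T_min_ge assms by blast
  moreover have "T (Suc m,j) \<noteq> {}" using T_in assms by blast
  ultimately show ?thesis by (rule T_all_N)
qed

end

definition svt_M :: "(nat \<Rightarrow> nat) \<Rightarrow> nat \<Rightarrow> (nat \<Rightarrow> nat) set" where
  "svt_M lam m = PiE {1..m} (\<lambda>i. {lam (Suc i)..lam i})"

definition svt_C :: "(nat \<Rightarrow> nat) \<Rightarrow> nat \<Rightarrow> (nat \<Rightarrow> nat) \<Rightarrow> nat set" where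
  "svt_C lam m mu = {i\<in>{1..m}. lam (Suc i) < mu i}"

definition svt_Dom where
  "svt_Dom lam m = Sigma (svt_M lam m) (\<lambda>mu. Pow (svt_C lam m mu) \<times> SVT mu m)"

definition svt_f :: "(nat \<Rightarrow> nat) \<Rightarrow> nat \<Rightarrow> (nat \<Rightarrow> nat) \<times> nat set \<times> (nat \<times> nat \<Rightarrow> nat set) \<Rightarrow> (nat \<times> nat \<Rightarrow> nat set)" where
  "svt_f lam m = (\<lambda>(mu, S, T'). \<lambda>(i,j). if (i,j) \<in> young_diagram m mu
      then T' (i,j) \<union> (if i \<in> S \<and> j = mu i then {Suc m} else {})
      else if (i,j) \<in> young_diagram (Suc m) lam then {Suc m} else {})"

definition svt_mu :: "(nat \<Rightarrow> nat) \<Rightarrow> nat \<Rightarrow> (nat \<times> nat \<Rightarrow> nat set) \<Rightarrow> nat \<Rightarrow> nat" where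
  "svt_mu lam m T = restrict (\<lambda>i. card {j\<in>{1..lam i}. T (i,j) \<noteq> {Suc m}}) {1..m}"

definition svt_g where
  "svt_g lam m T = (svt_mu lam m T, {i\<in>{1..m}. Suc m \<in> T (i, svt_mu lam m T i)},
     \<lambda>b. if b \<in> young_diagram m (svt_mu lam m T) then T b - {Suc m} else {})"

context
  fixes lam :: "nat \<Rightarrow> nat" and m :: nat and T :: "nat \<times> nat \<Rightarrow> nat set"
  assumes part: "is_partition_n (Suc m) lam" and svt: "T \<in> SVT lam (Suc m)"
begin

lemma Z_eq:
  assumes i: "i \<in> {1..m}"
  shows "{j\<in>{1..lam i}. T (i,j) \<noteq> {Suc m}} = {1..svt_mu lam m T i}"
proof -
  have "{j\<in>{1..lam i}. T (i,j) \<noteq> {Suc m}} = {1..card {j\<in>{1..lam i}. T (i,j) \<noteq> {Suc m}}}"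
  proof (rule downclosed_eq)
    show "finite {j \<in> {1..lam i}. T (i, j) \<noteq> {Suc m}}" by simp
    show "{j \<in> {1..lam i}. T (i, j) \<noteq> {Suc m}} \<subseteq> {1..}" by auto
    fix j j' assume j: "j \<in> {j \<in> {1..lam i}. T (i, j) \<noteq> {Suc m}}" and j': "1 \<le> j'" "j' \<le> j"
    show "j' \<in> {j \<in> {1..lam i}. T (i, j) \<noteq> {Suc m}}"
    proof (rule ccontr)
      assume "j' \<notin> {j \<in> {1..lam i}. T (i, j) \<noteq> {Suc m}}"
      then have "T (i,j') = {Suc m}" using j j' by auto
      then have "j' \<noteq> j" using j by auto
      then have "T (i,j) = {Suc m}"
        using T_N_right[OF part svt, of i j' j] \<open>T (i,j') = {Suc m}\<close> j j' i by auto
      then show False using j by auto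
    qed
  qed
  then show ?thesis using i by (simp add: svt_mu_def)
qed

lemma mu_char:
  assumes i: "i \<in> {1..m}"
  shows "(1 \<le> j \<and> j \<le> svt_mu lam m T i) \<longleftrightarrow> (1 \<le> j \<and> j \<le> lam i \<and> T (i,j) \<noteq> {Suc m})"
  using Z_eq[OF i] by (simp add: set_eq_iff)

lemma mu_le:
  assumes i: "i \<in> {1..m}"
  shows "svt_mu lam m T i \<le> lam i"
  using mu_char[OF i, of "svt_mu lam m T i"] by (cases "svt_mu lam m T i = 0") auto

lemma mu_ge:
  assumes i: "i \<in> {1..m}"
  shows "lam (Suc i) \<le> svt_mu lam m T i"
proof (cases "lam (Suc i) = 0")
  case True then show ?thesis by simp
next
  case False
  have Y: "(Suc i, lam (Suc i)) \<in> young_diagram (Suc m) lam" using False i by auto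
  have le: "lam (Suc i) \<le> lam i" using part i unfolding is_partition_n_def by auto
  have "T (i, lam (Suc i)) \<noteq> {Suc m}"
  proof
    assume "T (i, lam (Suc i)) = {Suc m}"
    then show False using T_N_below[OF part svt, of i "lam (Suc i)"] Y by simp
  qed
  then show ?thesis using mu_char[OF i, of "lam (Suc i)"] False le by auto
qed

lemma Ymu_Y:
  assumes "(i,j) \<in> young_diagram m (svt_mu lam m T)"
  shows "(i,j) \<in> young_diagram (Suc m) lam \<and> T (i,j) \<noteq> {Suc m}"
proof -
  have i: "i \<in> {1..m}" using assms by simp
  then show ?thesis using mu_char[OF i, of j] assms by auto
qed

lemma notYmu:
  assumes "(i,j) \<in> young_diagram (Suc m) lam" "(i,j) \<notin> young_diagram m (svt_mu lam m T)"
  shows "T (i,j) = {Suc m}"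
proof (cases "i = Suc m")
  case True
  then show ?thesis using T_last_row[OF part svt] assms(1) by simp
next
  case False
  then have i: "i \<in> {1..m}" using assms(1) by auto
  then show ?thesis using mu_char[OF i, of j] assms by auto
qed

lemma g_in_Dom: "svt_g lam m T \<in> svt_Dom lam m"
proof -
  define mu where "mu = svt_mu lam m T"
  define S where "S = {i\<in>{1..m}. Suc m \<in> T (i, mu i)}"
  define T' where "T' = (\<lambda>b. if b \<in> young_diagram m mu then T b - {Suc m} else {})"
  have g: "svt_g lam m T = (mu, S, T')" by (simp add: svt_g_def mu_def S_def T'_def)
  have M: "mu \<in> svt_M lam m"
    unfolding svt_M_def mu_def using mu_le mu_ge by (auto simp: svt_mu_def PiE_iff)
  have SC: "S \<subseteq> svt_C lam m mu"
  proof
    fix i assume "i \<in> S"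
    then have i: "i \<in> {1..m}" and N: "Suc m \<in> T (i, mu i)" by (auto simp: S_def)
    have "(i, mu i) \<in> young_diagram (Suc m) lam" using N T_out[OF part svt] by blast
    then have "1 \<le> mu i" by simp
    have "lam (Suc i) < mu i"
    proof (rule ccontr)
      assume "\<not> lam (Suc i) < mu i"
      then have "(Suc i, mu i) \<in> young_diagram (Suc m) lam" using i \<open>1 \<le> mu i\<close> by auto
      then show False using T_N_below[OF part svt N] by simp
    qed
    then show "i \<in> svt_C lam m mu" using i by (simp add: svt_C_def)
  qed
  have fin: "finite (T b)" for b using T_fin[OF part svt] .
  have T'svt: "T' \<in> SVT mu m"
    unfolding SVT_def
  proof (intro CollectI conjI allI impI ballI)
    fix b assume "b \<notin> young_diagram m mu"
    then show "T' b = {}" by (simp add: T'_def)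
  next
    fix b assume b: "b \<in> young_diagram m mu"
    obtain i j where bij: "b = (i,j)" by force
    have Y: "b \<in> young_diagram (Suc m) lam" and ne: "T b \<noteq> {Suc m}"
      using Ymu_Y[of i j] b bij by (auto simp: mu_def)
    have "T b \<noteq> {}" "T b \<subseteq> {1..Suc m}" using T_in[OF part svt Y] by auto
    then show "T' b \<noteq> {}" using ne b by (auto simp: T'_def)
    show "T' b \<subseteq> {1..m}" using \<open>T b \<subseteq> {1..Suc m}\<close> b by (auto simp: T'_def)
  next
    fix i j assume a: "(i, j) \<in> young_diagram m mu \<and> (i, Suc j) \<in> young_diagram m mu"
    have Y1: "(i,j) \<in> young_diagram (Suc m) lam" and Y2: "(i,Suc j) \<in> young_diagram (Suc m) lam"
      and ne2: "T (i, Suc j) \<noteq> {Suc m}"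
      using Ymu_Y a by (auto simp: mu_def)
    have nN: "Suc m \<notin> T (i,j)" using T_N_right[OF part svt _ Y2, of j] ne2 by auto
    have ne2': "T (i, Suc j) - {Suc m} \<noteq> {}" using T_in[OF part svt Y2] ne2 by auto
    have "Max (T' (i,j)) = Max (T (i,j))" using a nN by (simp add: T'_def)
    also have "\<dots> \<le> Min (T (i, Suc j))" using T_row[OF part svt Y1 Y2] .
    also have "\<dots> \<le> Min (T (i, Suc j) - {Suc m})" using Min_antimono[OF _ ne2'] fin by auto
    also have "\<dots> = Min (T' (i, Suc j))" using a by (simp add: T'_def)
    finally show "Max (T' (i,j)) \<le> Min (T' (i, Suc j))" .
  next
    fix i j assume a: "(i, j) \<in> young_diagram m mu \<and> (Suc i, j) \<in> young_diagram m mu"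
    have Y1: "(i,j) \<in> young_diagram (Suc m) lam" and Y2: "(Suc i,j) \<in> young_diagram (Suc m) lam"
      and ne2: "T (Suc i, j) \<noteq> {Suc m}"
      using Ymu_Y a by (auto simp: mu_def)
    have nN: "Suc m \<notin> T (i,j)" using T_N_below[OF part svt, of i j] Y2 by auto
    have ne2': "T (Suc i, j) - {Suc m} \<noteq> {}" using T_in[OF part svt Y2] ne2 by auto
    have "Max (T' (i,j)) = Max (T (i,j))" using a nN by (simp add: T'_def)
    also have "\<dots> < Min (T (Suc i, j))" using T_col[OF part svt Y1 Y2] .
    also have "\<dots> \<le> Min (T (Suc i, j) - {Suc m})" using Min_antimono[OF _ ne2'] fin by auto
    also have "\<dots> = Min (T' (Suc i, j))" using a by (simp add: T'_def)
    finally show "Max (T' (i,j)) < Min (T' (Suc i, j))" .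
  qed
  show ?thesis unfolding g svt_Dom_def using M SC T'svt by auto
qed

lemma f_g: "svt_f lam m (svt_g lam m T) = T"
proof
  fix b :: "nat \<times> nat"
  obtain i j where bij: "b = (i,j)" by force
  define mu where "mu = svt_mu lam m T"
  show "svt_f lam m (svt_g lam m T) b = T b"
  proof (cases "(i,j) \<in> young_diagram m mu")
    case True
    have i: "i \<in> {1..m}" using True by simp
    show ?thesis
    proof (cases "Suc m \<in> T (i,j)")
      case N: True
      have "j = mu i"
      proof (rule ccontr)
        assume "j \<noteq> mu i"
        then have "(i, Suc j) \<in> young_diagram m mu" using True by auto
        then have "(i, Suc j) \<in> young_diagram (Suc m) lam \<and> T (i, Suc j) \<noteq> {Suc m}"
          using Ymu_Y by (simp add: mu_def)
        then show False using T_N_right[OF part svt N, of "Suc j"] by auto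
      qed
      then show ?thesis using True N i bij
        by (auto simp: svt_f_def svt_g_def mu_def[symmetric])
    next
      case nN: False
      then show ?thesis using True bij
        by (auto simp: svt_f_def svt_g_def mu_def[symmetric])
    qed
  next
    case False
    then show ?thesis using bij notYmu[of i j] T_out[OF part svt, of b]
      by (auto simp: svt_f_def svt_g_def mu_def[symmetric])
  qed
qed

end

lemma Min_ins_big:
  fixes A :: "nat set"
  assumes "finite A" "A \<noteq> {}" "A \<subseteq> {1..m}" "E \<subseteq> {Suc m}"
  shows "Min (A \<union> E) = Min A"
proof (cases "E = {}")
  case True then show ?thesis by simp
next
  case False
  then have E: "E = {Suc m}" using assms(4) by auto
  have MA: "Min A \<in> A" using assms(1,2) by simp
  then have "Min A \<le> m" using assms(3) by auto
  show ?thesis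
  proof (rule Min_eqI)
    show "finite (A \<union> E)" using assms(1) E by simp
    show "Min A \<in> A \<union> E" using MA by simp
    fix y assume "y \<in> A \<union> E"
    then show "Min A \<le> y" using E \<open>Min A \<le> m\<close> assms(1) by auto
  qed
qed

context
  fixes lam :: "nat \<Rightarrow> nat" and m :: nat and mu :: "nat \<Rightarrow> nat"
    and S :: "nat set" and T' :: "nat \<times> nat \<Rightarrow> nat set"
  assumes part: "is_partition_n (Suc m) lam" and dom: "(mu, S, T') \<in> svt_Dom lam m"
begin

lemma mu_rng: "i \<in> {1..m} \<Longrightarrow> lam (Suc i) \<le> mu i \<and> mu i \<le> lam i"
  using dom by (auto simp: svt_Dom_def svt_M_def PiE_iff)

lemma mu_ext: "i \<notin> {1..m} \<Longrightarrow> mu i = undefined"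
  using dom by (auto simp: svt_Dom_def svt_M_def PiE_iff extensional_def)

lemma S_C: "i \<in> S \<Longrightarrow> i \<in> {1..m} \<and> lam (Suc i) < mu i"
  using dom by (auto simp: svt_Dom_def svt_C_def)

lemma T'svt: "T' \<in> SVT mu m"
  using dom by (auto simp: svt_Dom_def)

lemma T'_out: "b \<notin> young_diagram m mu \<Longrightarrow> T' b = {}"
  using T'svt unfolding SVT_def by blast

lemma T'_in: "b \<in> young_diagram m mu \<Longrightarrow> T' b \<noteq> {} \<and> T' b \<subseteq> {1..m}"
  using T'svt unfolding SVT_def by blast

lemma T'_fin: "finite (T' b)"
proof (cases "b \<in> young_diagram m mu")
  case True
  then show ?thesis using T'_in finite_subset[of "T' b" "{1..m}"] by auto
next
  case False
  then show ?thesis using T'_out by simp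
qed

lemma T'_le: "x \<in> T' b \<Longrightarrow> x \<le> m"
proof (cases "b \<in> young_diagram m mu")
  case True
  show "x \<in> T' b \<Longrightarrow> x \<le> m"
  proof -
    assume x: "x \<in> T' b"
    have "x \<in> {1..m}" using T'_in[OF True] x by blast
    then show ?thesis by simp
  qed
next
  case False
  then show "x \<in> T' b \<Longrightarrow> x \<le> m" using T'_out by simp
qed

lemma Ymu_sub: "(i,j) \<in> young_diagram m mu \<Longrightarrow> (i,j) \<in> young_diagram (Suc m) lam"
  using mu_rng[of i] by auto

lemma F_Ymu: "(i,j) \<in> young_diagram m mu \<Longrightarrow>
   svt_f lam m (mu,S,T') (i,j) = T' (i,j) \<union> (if i \<in> S \<and> j = mu i then {Suc m} else {})"
  by (simp add: svt_f_def)

lemma F_notYmu: "(i,j) \<notin> young_diagram m mu \<Longrightarrow>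
   svt_f lam m (mu,S,T') (i,j) = (if (i,j) \<in> young_diagram (Suc m) lam then {Suc m} else {})"
  unfolding svt_f_def by (simp del: Yd)

lemma F_min:
  assumes Y: "(i,j) \<in> young_diagram m mu"
  shows "Min (svt_f lam m (mu,S,T') (i,j)) = Min (T' (i,j))"
proof -
  have "Min (svt_f lam m (mu,S,T') (i,j)) = Min (T' (i,j) \<union> (if i \<in> S \<and> j = mu i then {Suc m} else {}))"
    using F_Ymu[OF Y] by simp
  also have "\<dots> = Min (T' (i,j))"
    by (rule Min_ins_big) (use T'_fin T'_in[OF Y] in auto)
  finally show ?thesis .
qed

lemma F_sub: "svt_f lam m (mu,S,T') b \<subseteq> T' b \<union> {Suc m}"
proof -
  obtain i j where b: "b = (i,j)" by force
  show ?thesis unfolding b svt_f_def by auto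
qed

lemma F_fin: "finite (svt_f lam m (mu,S,T') b)"
  using F_sub T'_fin finite_subset by blast

lemma F_le: "x \<in> svt_f lam m (mu,S,T') b \<Longrightarrow> x \<le> Suc m"
  using F_sub[of b] T'_le[of x b] by auto

lemma F_Max_le: "svt_f lam m (mu,S,T') b \<noteq> {} \<Longrightarrow> Max (svt_f lam m (mu,S,T') b) \<le> Suc m"
  using F_fin F_le by simp

lemma f_in_SVT: "svt_f lam m (mu,S,T') \<in> SVT lam (Suc m)"
  unfolding SVT_def
proof (intro CollectI conjI allI impI ballI)
  fix b assume b: "b \<notin> young_diagram (Suc m) lam"
  obtain i j where bij: "b = (i,j)" by force
  have "(i,j) \<notin> young_diagram m mu" using Ymu_sub b bij by blast
  then show "svt_f lam m (mu,S,T') b = {}" using b bij F_notYmu by simp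
next
  fix b assume b: "b \<in> young_diagram (Suc m) lam"
  obtain i j where bij: "b = (i,j)" by force
  show "svt_f lam m (mu,S,T') b \<noteq> {}"
    using T'_in[of b] b bij by (cases "(i,j) \<in> young_diagram m mu") (auto simp: F_Ymu F_notYmu)
  show "svt_f lam m (mu,S,T') b \<subseteq> {1..Suc m}"
    using T'_in[of b] b bij by (cases "(i,j) \<in> young_diagram m mu") (auto simp: F_Ymu F_notYmu)
next
  fix i j assume a: "(i, j) \<in> young_diagram (Suc m) lam \<and> (i, Suc j) \<in> young_diagram (Suc m) lam"
  let ?F = "svt_f lam m (mu,S,T')"
  show "Max (?F (i,j)) \<le> Min (?F (i, Suc j))"
  proof (cases "(i, Suc j) \<in> young_diagram m mu")
    case True
    then have Y1: "(i,j) \<in> young_diagram m mu" using a by auto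
    have "j \<noteq> mu i" using True by auto
    then have "?F (i,j) = T' (i,j)" using F_Ymu[OF Y1] by simp
    then have "Max (?F (i,j)) = Max (T' (i,j))" by simp
    also have "\<dots> \<le> Min (T' (i, Suc j))" using T'svt Y1 True unfolding SVT_def by blast
    also have "\<dots> = Min (?F (i, Suc j))" using F_min[OF True] by simp
    finally show ?thesis .
  next
    case False
    then have "?F (i, Suc j) = {Suc m}" using a F_notYmu by simp
    moreover have "?F (i,j) \<noteq> {}"
      using T'_in[of "(i,j)"] a by (cases "(i,j) \<in> young_diagram m mu") (auto simp: F_Ymu F_notYmu)
    ultimately show ?thesis using F_Max_le by simp
  qed
next
  fix i j assume a: "(i, j) \<in> young_diagram (Suc m) lam \<and> (Suc i, j) \<in> young_diagram (Suc m) lam"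
  let ?F = "svt_f lam m (mu,S,T')"
  have i: "i \<in> {1..m}" using a by auto
  have "j \<le> lam (Suc i)" using a by auto
  then have jmu: "j \<le> mu i" using mu_rng[OF i] by simp
  then have Y1: "(i,j) \<in> young_diagram m mu" using a by auto
  have "\<not> (i \<in> S \<and> j = mu i)" using S_C \<open>j \<le> lam (Suc i)\<close> by fastforce
  then have "(if i \<in> S \<and> j = mu i then {Suc m} else {}) = {}" by simp
  then have F1: "?F (i,j) = T' (i,j)" using F_Ymu[OF Y1] by simp
  show "Max (?F (i,j)) < Min (?F (Suc i, j))"
  proof (cases "(Suc i, j) \<in> young_diagram m mu")
    case True
    have "Max (?F (i,j)) = Max (T' (i,j))" using F1 by simp
    also have "\<dots> < Min (T' (Suc i, j))" using T'svt Y1 True unfolding SVT_def by blast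
    also have "\<dots> = Min (?F (Suc i, j))" using F_min[OF True] by simp
    finally show ?thesis .
  next
    case False
    then have "?F (Suc i, j) = {Suc m}" using a F_notYmu by simp
    moreover have "Max (T' (i,j)) \<le> m" using T'_in[OF Y1] T'_fin T'_le by simp
    ultimately show ?thesis using F1 by simp
  qed
qed

lemma g_f: "svt_g lam m (svt_f lam m (mu,S,T')) = (mu,S,T')"
proof -
  let ?F = "svt_f lam m (mu,S,T')"
  have Fne: "?F (i,j) \<noteq> {Suc m}" if "(i,j) \<in> young_diagram m mu" for i j
  proof -
    have "T' (i,j) \<noteq> {}" using T'_in that by blast
    then obtain x where "x \<in> T' (i,j)" by blast
    then have x1: "x \<in> ?F (i,j)" and x2: "x \<le> m" using F_Ymu[OF that] T'_le by auto
    show ?thesis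
    proof
      assume "?F (i,j) = {Suc m}"
      then have "x = Suc m" using x1 by simp
      then show False using x2 by simp
    qed
  qed
  have MU: "svt_mu lam m ?F = mu"
  proof
    fix i
    show "svt_mu lam m ?F i = mu i"
    proof (cases "i \<in> {1..m}")
      case True
      have "{j\<in>{1..lam i}. ?F (i,j) \<noteq> {Suc m}} = {1..mu i}"
      proof (rule Set.set_eqI)
        fix j
        show "j \<in> {j\<in>{1..lam i}. ?F (i,j) \<noteq> {Suc m}} \<longleftrightarrow> j \<in> {1..mu i}"
        proof (cases "(i,j) \<in> young_diagram m mu")
          case Y: True
          then show ?thesis using Fne[OF Y] mu_rng[OF True] by auto
        next
          case nY: False
          show ?thesis
          proof (cases "(i,j) \<in> young_diagram (Suc m) lam")
            case Y2: True
            then show ?thesis using nY F_notYmu[OF nY] \<open>i \<in> {1..m}\<close> by auto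
          next
            case False
            then show ?thesis using nY \<open>i \<in> {1..m}\<close> by auto
          qed
        qed
      qed
      then show ?thesis using True by (simp add: svt_mu_def)
    next
      case False
      then show ?thesis by (simp add: svt_mu_def mu_ext[OF False] del: atLeastAtMost_iff)
    qed
  qed
  have SS: "{i\<in>{1..m}. Suc m \<in> ?F (i, mu i)} = S"
  proof (rule Set.set_eqI)
    fix i
    show "i \<in> {i\<in>{1..m}. Suc m \<in> ?F (i, mu i)} \<longleftrightarrow> i \<in> S"
    proof
      assume "i \<in> S"
      then have i: "i \<in> {1..m}" and lt: "lam (Suc i) < mu i" using S_C by auto
      then have "(i, mu i) \<in> young_diagram m mu" by auto
      then show "i \<in> {i\<in>{1..m}. Suc m \<in> ?F (i, mu i)}" using F_Ymu \<open>i \<in> S\<close> i by simp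
    next
      assume a: "i \<in> {i\<in>{1..m}. Suc m \<in> ?F (i, mu i)}"
      then have i: "i \<in> {1..m}" and N: "Suc m \<in> ?F (i, mu i)" by auto
      show "i \<in> S"
      proof (cases "(i, mu i) \<in> young_diagram m mu")
        case True
        have "Suc m \<notin> T' (i, mu i)" using T'_le by fastforce
        then show ?thesis using N F_Ymu[OF True] by (auto split: if_splits)
      next
        case False
        then have "mu i = 0" using i by auto
        then show ?thesis using N F_notYmu[OF False] by (auto split: if_splits)
      qed
    qed
  qed
  have TT: "(\<lambda>b. if b \<in> young_diagram m mu then ?F b - {Suc m} else {}) = T'"
  proof
    fix b :: "nat \<times> nat"
    obtain i j where bij: "b = (i,j)" by force
    show "(if b \<in> young_diagram m mu then ?F b - {Suc m} else {}) = T' b"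
    proof (cases "(i,j) \<in> young_diagram m mu")
      case True
      have "Suc m \<notin> T' (i,j)" using T'_le by fastforce
      then show ?thesis using True bij F_Ymu[OF True] by auto
    next
      case False
      then show ?thesis using bij T'_out by auto
    qed
  qed
  show ?thesis unfolding svt_g_def MU SS TT by simp
qed

end

lemma card_SVT_Suc:
  assumes part: "is_partition_n (Suc m) lam"
  shows "card (SVT lam (Suc m)) = (\<Sum>mu\<in>svt_M lam m. 2 ^ card (svt_C lam m mu) * card (SVT mu m))"
proof -
  have "bij_betw (svt_f lam m) (svt_Dom lam m) (SVT lam (Suc m))"
  proof (rule bij_betw_byWitness[where f'="svt_g lam m"])
    show "\<forall>a\<in>svt_Dom lam m. svt_g lam m (svt_f lam m a) = a" using g_f[OF part] by auto
    show "\<forall>a'\<in>SVT lam (Suc m). svt_f lam m (svt_g lam m a') = a'" using f_g[OF part] by auto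
    show "svt_f lam m ` svt_Dom lam m \<subseteq> SVT lam (Suc m)" using f_in_SVT[OF part] by auto
    show "svt_g lam m ` SVT lam (Suc m) \<subseteq> svt_Dom lam m" using g_in_Dom[OF part] by auto
  qed
  then have "card (SVT lam (Suc m)) = card (svt_Dom lam m)" by (simp add: bij_betw_same_card)
  also have "\<dots> = (\<Sum>mu\<in>svt_M lam m. card (Pow (svt_C lam m mu) \<times> SVT mu m))"
    unfolding svt_Dom_def
    by (rule card_SigmaI) (auto simp: svt_M_def svt_C_def finite_SVT intro!: finite_PiE)
  also have "\<dots> = (\<Sum>mu\<in>svt_M lam m. 2 ^ card (svt_C lam m mu) * card (SVT mu m))"
    by (rule sum.cong) (auto simp: card_cartesian_product card_Pow svt_C_def)
  finally show ?thesis .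
qed



lemma prod_if_2:
  assumes "finite A"
  shows "(\<Prod>i\<in>A. (if P i then 2 else 1 :: real)) = 2 ^ card {i\<in>A. P i}"
proof -
  have "(\<Prod>i\<in>A. (if P i then 2 else 1 :: real)) = (\<Prod>i\<in>A \<inter> {x. P x}. 2) * (\<Prod>i\<in>A \<inter> - {x. P x}. 1)"
    by (rule prod.If_cases) (rule assms)
  also have "\<dots> = 2 ^ card (A \<inter> {x. P x})" by simp
  also have "A \<inter> {x. P x} = {i\<in>A. P i}" by auto
  finally show ?thesis .
qed

lemma SVT_0: "SVT lam 0 = {\<lambda>_. {}}"
  unfolding SVT_def by (auto simp: young_diagram_def)

lemma main_eq:
  assumes "is_partition_n n lam"
  shows "real (card (SVT lam n)) = detF n lam"
  using assms
proof (induction n arbitrary: lam)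
  case 0
  then show ?case by (simp add: SVT_0 detF_0)
next
  case (Suc m)
  have part: "\<And>i. 1 \<le> i \<Longrightarrow> i \<le> m \<Longrightarrow> lam (Suc i) \<le> lam i"
    using Suc.prems unfolding is_partition_n_def by auto
  have "real (card (SVT lam (Suc m))) = (\<Sum>mu\<in>svt_M lam m. real (2 ^ card (svt_C lam m mu) * card (SVT mu m)))"
    using card_SVT_Suc[OF Suc.prems] by simp
  also have "\<dots> = (\<Sum>mu\<in>svt_M lam m. (\<Prod>i\<in>{1..m}. (if lam (Suc i) < mu i then 2 else 1)) * detF m mu)"
  proof (rule sum.cong[OF refl])
    fix mu assume mu: "mu \<in> svt_M lam m"
    have pm: "is_partition_n m mu"
      unfolding is_partition_n_def
    proof (intro allI impI)
      fix i assume i: "1 \<le> i \<and> i < m"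
      have "mu (Suc i) \<le> lam (Suc i)" using mu i by (auto simp: svt_M_def PiE_iff)
      also have "\<dots> \<le> mu i" using mu i by (auto simp: svt_M_def PiE_iff)
      finally show "mu (Suc i) \<le> mu i" .
    qed
    have "(\<Prod>i\<in>{1..m}. (if lam (Suc i) < mu i then 2 else 1 :: real)) = 2 ^ card (svt_C lam m mu)"
      unfolding svt_C_def by (rule prod_if_2) simp
    then show "real (2 ^ card (svt_C lam m mu) * card (SVT mu m)) =
      (\<Prod>i\<in>{1..m}. (if lam (Suc i) < mu i then 2 else 1)) * detF m mu"
      using Suc.IH[OF pm] by simp
  qed
  also have "\<dots> = detF (Suc m) lam"
    unfolding svt_M_def by (rule detF_rec[symmetric]) (rule part)
  finally show ?case .
qed

theorem corollary3p6:
  fixes n :: nat and lam :: "nat \<Rightarrow> nat"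
  assumes "n \<ge> 1" and "is_partition_n n lam"
  shows "real (card (SVT lam n)) =
    (\<Sum>k\<in>PiE {1..n} (\<lambda>i. {0..i - 1}).
       (\<Prod>i\<in>{1..n}. real ((i - 1) choose k i)) *
       (\<Prod>(i, j)\<in>{(i, j). 1 \<le> i \<and> i < j \<and> j \<le> n}.
          (real_of_int (int (lam i) - int (lam j) + int (k i) - int (k j) + int j - int i))
          / real (j - i)))"
  unfolding rhs_det by (rule main_eq[OF assms(2)])

end
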